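(* Let $G$ be a finite group and let $p,q$ be distinct primes dividing $|G|$. Let $m,n$ be positive integers and suppose that $|G| = p^i q^n$ for some integer $i$ with $1 \le i \le m$. If $p \nmid q^n - 1$ and $q \nmid p^{\gcd([m],\, q-1)} - 1$, then $G$ has an abelian subgroup of order $pq$.
   Context: For a positive integer $m$, $[m]$ denotes the least common multiple of $1,2,\dots,m$, i.e. $[m] = \operatorname{lcm}(1,2,\dots,m)$. $\gcd(a,b)$ denotes the greatest common divisor. *)

theory Defs
  imports "HOL-Algebra.Algebra"
begin

text \<open>[m] = lcm(1,2,...,m)\<close>
definition lcm_upto :: "nat \<Rightarrow> nat" where
  "lcm_upto m = Lcm {1..m}"

end

theory Submission
  imports Defs "HOL-Number_Theory.Number_Theory"
begin


lemma group_actionI: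
  assumes K: "group K"
    and ext: "\<And>g. g \<in> carrier K \<Longrightarrow> \<phi> g \<in> extensional E"
    and cl: "\<And>g x. g \<in> carrier K \<Longrightarrow> x \<in> E \<Longrightarrow> \<phi> g x \<in> E"
    and one: "\<And>x. x \<in> E \<Longrightarrow> \<phi> \<one>\<^bsub>K\<^esub> x = x"
    and mult: "\<And>g h x. g \<in> carrier K \<Longrightarrow> h \<in> carrier K \<Longrightarrow> x \<in> E \<Longrightarrow> \<phi> (g \<otimes>\<^bsub>K\<^esub> h) x = \<phi> g (\<phi> h x)"
  shows "group_action K E \<phi>"
proof -
  interpret K: group K by fact
  have bij: "\<phi> g \<in> Bij E" if g: "g \<in> carrier K" for g
  proof -
    have inv1: "\<phi> (inv\<^bsub>K\<^esub> g) (\<phi> g x) = x" if "x\<in>E" for x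
      using mult[of "inv\<^bsub>K\<^esub> g" g x] one g that by simp
    have inv2: "\<phi> g (\<phi> (inv\<^bsub>K\<^esub> g) x) = x" if "x\<in>E" for x
      using mult[of g "inv\<^bsub>K\<^esub> g" x] one g that by simp
    have "bij_betw (\<phi> g) E E"
      unfolding bij_betw_def inj_on_def
    proof (intro conjI ballI impI)
      fix x y assume "x \<in> E" "y \<in> E" "\<phi> g x = \<phi> g y"
      then show "x = y" using inv1 by metis
    next
      show "\<phi> g ` E = E"
      proof
        show "\<phi> g ` E \<subseteq> E" using cl g by auto
        show "E \<subseteq> \<phi> g ` E"
        proof
          fix x assume x: "x \<in> E"
          then have "x = \<phi> g (\<phi> (inv\<^bsub>K\<^esub> g) x)" using inv2 by simp
          moreover have "\<phi> (inv\<^bsub>K\<^esub> g) x \<in> E" using cl g x by simp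
          ultimately show "x \<in> \<phi> g ` E" by blast
        qed
      qed
    qed
    then show ?thesis using ext g unfolding Bij_def by simp
  qed
  have hom: "\<phi> (g \<otimes>\<^bsub>K\<^esub> h) = compose E (\<phi> g) (\<phi> h)" if "g \<in> carrier K" "h \<in> carrier K" for g h
  proof
    fix x show "\<phi> (g \<otimes>\<^bsub>K\<^esub> h) x = compose E (\<phi> g) (\<phi> h) x"
      using mult[OF that] ext[of "g \<otimes>\<^bsub>K\<^esub> h"] that
      by (cases "x \<in> E") (auto simp: compose_def extensional_def)
  qed
  show ?thesis
    unfolding group_action_def group_hom_def group_hom_axioms_def
  proof (intro conjI K group_BijGroup)
    show "\<phi> \<in> hom K (BijGroup E)"
      unfolding hom_def BijGroup_def using bij hom by auto
  qed
qed

lemma fix_mod: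
  assumes act: "group_action K E \<phi>" and fin: "finite E" and r: "Factorial_Ring.prime (r::nat)"
    and ordK: "order K = r ^ k"
  shows "card E mod r = card {x\<in>E. \<forall>g\<in>carrier K. \<phi> g x = x} mod r"
proof -
  interpret A: group_action K E \<phi> by fact
  have grp: "group K" using A.group_hom group_hom.axioms(1) by blast
  define F where "F = {x\<in>E. \<forall>g\<in>carrier K. \<phi> g x = x}"
  define Orbs where "Orbs = orbits K E \<phi>"
  have orbE: "orbit K \<phi> x \<subseteq> E" if "x \<in> E" for x
    using A.element_image that unfolding orbit_def by blast
  have Osub: "Orbs \<subseteq> Pow E" using orbE unfolding Orbs_def orbits_def by auto
  have finO: "finite Orbs" using Osub fin by (meson finite_Pow_iff finite_subset)
  have cardE: "card E = (\<Sum>C\<in>Orbs. card C)"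
    using A.disjoint_sum[OF fin, of "\<lambda>_. 1::nat"] by (simp add: Orbs_def)
  have orbcard: "card C = 1 \<or> r dvd card C" if CO: "C \<in> Orbs" for C
  proof -
    obtain x where x: "x \<in> E" and C: "C = orbit K \<phi> x"
      using CO unfolding Orbs_def orbits_def by blast
    have "card C dvd r ^ k"
      using A.orbit_stabilizer_theorem[OF x] ordK C by (metis dvd_triv_left)
    then obtain j where "j \<le> k" "card C = r ^ j"
      using divides_primepow_nat[OF r] by blast
    then show ?thesis by (cases j) auto
  qed
  define O1 where "O1 = {C\<in>Orbs. card C = 1}"
  have O1sub: "O1 \<subseteq> Orbs" unfolding O1_def by auto
  have split: "(\<Sum>C\<in>Orbs. card C) = (\<Sum>C\<in>Orbs - O1. card C) + (\<Sum>C\<in>O1. card C)"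
    using sum.subset_diff[OF O1sub finO] by simp
  have dvd2: "r dvd (\<Sum>C\<in>Orbs - O1. card C)"
    by (rule dvd_sum) (use orbcard in \<open>auto simp: O1_def\<close>)
  have s1: "(\<Sum>C\<in>O1. card C) = card O1"
    unfolding O1_def by simp
  have O1eq: "O1 = (\<lambda>x. {x}) ` F"
  proof
    show "O1 \<subseteq> (\<lambda>x. {x}) ` F"
    proof
      fix C assume "C \<in> O1"
      then have oO: "C \<in> Orbs" and c1: "card C = 1" unfolding O1_def by auto
      obtain x where x: "x \<in> E" and C: "C = orbit K \<phi> x"
        using oO unfolding Orbs_def orbits_def by blast
      have "x \<in> C" using A.orbit_refl[OF x] C by simp
      then have ox: "C = {x}" using c1 by (metis card_1_singletonE singletonD)
      have "\<phi> g x = x" if "g \<in> carrier K" for g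
        using ox C that unfolding orbit_def by blast
      then have "x \<in> F" using x unfolding F_def by auto
      then show "C \<in> (\<lambda>x. {x}) ` F" using ox by blast
    qed
    show "(\<lambda>x. {x}) ` F \<subseteq> O1"
    proof
      fix C assume "C \<in> (\<lambda>x. {x}) ` F"
      then obtain x where x: "x \<in> F" and C: "C = {x}" by blast
      have fx: "\<forall>g\<in>carrier K. \<phi> g x = x" using x unfolding F_def by simp
      have one: "\<one>\<^bsub>K\<^esub> \<in> carrier K" using monoid.one_closed[OF group.is_monoid[OF grp]] .
      have "orbit K \<phi> x = {x}"
      proof
        show "orbit K \<phi> x \<subseteq> {x}" using fx unfolding orbit_def by auto
        show "{x} \<subseteq> orbit K \<phi> x" using fx one unfolding orbit_def by (metis (mono_tags, lifting) empty_subsetI insert_subset mem_Collect_eq)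
      qed
      moreover have "orbit K \<phi> x \<in> Orbs" using x unfolding Orbs_def orbits_def F_def by blast
      ultimately show "C \<in> O1" unfolding O1_def using C by auto
    qed
  qed
  have "card O1 = card F" unfolding O1eq by (rule card_image) (auto simp: inj_on_def)
  then have "card E = (\<Sum>C\<in>Orbs - O1. card C) + card F"
    using cardE split s1 by simp
  moreover obtain t where "(\<Sum>C\<in>Orbs - O1. card C) = r * t" using dvd2 by blast
  ultimately have "card E = r * t + card F" by simp
  then show ?thesis unfolding F_def by simp
qed

lemma arith_key:
  fixes p q m i j :: nat
  assumes p: "Factorial_Ring.prime p" and q: "Factorial_Ring.prime q" and pq: "p \<noteq> q"
    and ji: "j \<le> i" and im: "i \<le> m"
    and md: "p ^ i mod q = p ^ j mod q"
    and nd: "\<not> q dvd (p ^ (gcd (lcm_upto m) (q - 1)) - 1)"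
  shows "j = i"
proof (rule ccontr)
  assume "j \<noteq> i"
  define k where "k = i - j"
  have k0: "k > 0" "k \<le> m" using ji im \<open>j \<noteq> i\<close> unfolding k_def by auto
  have "p ^ i = p ^ j * p ^ k" unfolding k_def using ji by (simp add: power_add[symmetric])
  then have "[p ^ j * p ^ k = p ^ j * 1] (mod q)" using md unfolding cong_def by simp
  moreover have "coprime (p ^ j) q"
    using p q pq by (simp add: primes_coprime coprime_power_left_iff)
  ultimately have c1: "[p ^ k = 1] (mod q)" using cong_mult_lcancel_nat by blast
  have nqp: "\<not> q dvd p" using p q pq by (metis prime_nat_iff primes_dvd_imp_eq)
  have c2: "[p ^ (q - 1) = 1] (mod q)" using fermat_theorem[OF q nqp] .
  have o1: "Pocklington.ord q p dvd k" using c1 ord_divides by blast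
  have o2: "Pocklington.ord q p dvd (q - 1)" using c2 ord_divides by blast
  have "k dvd lcm_upto m" unfolding lcm_upto_def using k0 by (intro dvd_Lcm) auto
  then have "Pocklington.ord q p dvd gcd (lcm_upto m) (q - 1)"
    using o1 o2 by (meson dvd_trans gcd_greatest)
  then have "[p ^ gcd (lcm_upto m) (q - 1) = 1] (mod q)" using ord_divides by blast
  then have "q dvd p ^ gcd (lcm_upto m) (q - 1) - 1" using cong_to_1_nat by blast
  then show False using nd by simp
qed


context group begin
lemma t1: "a\<in>carrier G \<Longrightarrow> z\<in>carrier G \<Longrightarrow> inv a \<otimes> (a \<otimes> z \<otimes> inv a) \<otimes> inv (inv a) = z"
  by (simp add: m_assoc) (metis inv_closed l_inv l_one m_assoc)
lemma t2: "a\<in>carrier G \<Longrightarrow> b\<in>carrier G \<Longrightarrow> y\<in>carrier G \<Longrightarrow> (a \<otimes> b) \<otimes> y \<otimes> inv (a \<otimes> b) = a \<otimes> (b \<otimes> y \<otimes> inv b) \<otimes> inv a"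
  by (simp add: m_assoc inv_mult_group)
lemma t3: "a\<in>carrier G \<Longrightarrow> z1\<in>carrier G \<Longrightarrow> z2\<in>carrier G \<Longrightarrow> a \<otimes> z1 \<otimes> inv a = a \<otimes> z2 \<otimes> inv a \<Longrightarrow> z1 = z2"
  by (simp add: m_assoc)

lemma normal_sylow:
  fixes p q m n i :: nat and Q
  assumes fin: "finite (carrier G)" and p: "Factorial_Ring.prime p" and q: "Factorial_Ring.prime q"
    and pq: "p \<noteq> q" and im: "i \<le> m" and ordG: "order G = p ^ i * q ^ n"
    and nd: "\<not> q dvd (p ^ (gcd (lcm_upto m) (q - 1)) - 1)"
    and Q: "subgroup Q G" and cQ: "card Q = q ^ n"
  shows "\<forall>a\<in>carrier G. \<forall>y\<in>Q. a \<otimes> y \<otimes> inv a \<in> Q"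
proof -
  have Qc: "Q \<subseteq> carrier G" using Q subgroup.subset by blast
  have finQ: "finite Q" using fin Qc finite_subset by blast
  define N where "N = {a \<in> carrier G. \<forall>y\<in>Q. a \<otimes> y \<otimes> inv a \<in> Q}"
  have Nc: "N \<subseteq> carrier G" unfolding N_def by auto
  have Nsub: "subgroup N G"
  proof (rule subgroupI)
    show "N \<subseteq> carrier G" by (rule Nc)
    have "\<one> \<in> N" unfolding N_def using Qc by auto
    then show "N \<noteq> {}" by blast
  next
    fix a assume aN: "a \<in> N"
    then have ac: "a \<in> carrier G" and aQ: "\<forall>y\<in>Q. a \<otimes> y \<otimes> inv a \<in> Q" unfolding N_def by auto
    define f where "f = (\<lambda>z. a \<otimes> z \<otimes> inv a)"
    have "f ` Q \<subseteq> Q" using aQ unfolding f_def by auto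
    moreover have "inj_on f Q" unfolding inj_on_def f_def using Qc ac t3 by blast
    ultimately have fQ: "f ` Q = Q" using endo_inj_surj finQ by blast
    have "inv a \<otimes> y \<otimes> inv (inv a) \<in> Q" if yQ: "y \<in> Q" for y
    proof -
      obtain z where z: "z \<in> Q" "y = f z" using fQ yQ by (metis imageE)
      then have "inv a \<otimes> y \<otimes> inv (inv a) = z" unfolding f_def using ac Qc t1 by auto
      then show ?thesis using z by simp
    qed
    then show "inv a \<in> N" unfolding N_def using ac by auto
  next
    fix a b assume aN: "a \<in> N" and bN: "b \<in> N"
    then have ac: "a \<in> carrier G" and bc: "b \<in> carrier G" unfolding N_def by auto
    have "(a \<otimes> b) \<otimes> y \<otimes> inv (a \<otimes> b) \<in> Q" if y: "y \<in> Q" for y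
    proof -
      have "b \<otimes> y \<otimes> inv b \<in> Q" using bN y unfolding N_def by auto
      then have "a \<otimes> (b \<otimes> y \<otimes> inv b) \<otimes> inv a \<in> Q" using aN unfolding N_def by auto
      then show ?thesis using t2 ac bc y Qc by auto
    qed
    then show "a \<otimes> b \<in> N" unfolding N_def using ac bc by auto
  qed
  have QN: "Q \<subseteq> N"
    unfolding N_def using Qc Q by (auto intro!: subgroup.m_closed subgroup.m_inv_closed)
  define K where "K = G\<lparr>carrier := Q\<rparr>"
  define \<phi> where "\<phi> = (\<lambda>g. \<lambda>C\<in>rcosets Q. C #> inv g)"
  have grpK: "group K" unfolding K_def using subgroup.subgroup_is_group[OF Q is_group] .
  have rcE: "\<exists>a\<in>carrier G. C = Q #> a" if "C \<in> rcosets Q" for C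
    using that unfolding RCOSETS_def by blast
  have rcI: "Q #> a \<in> rcosets Q" if "a \<in> carrier G" for a
    using that unfolding RCOSETS_def by blast
  have rcsub: "C \<subseteq> carrier G" if "C \<in> rcosets Q" for C
    using rcE[OF that] r_coset_subset_G[OF Qc] by blast
  have rc: "C #> b \<in> rcosets Q" if C: "C \<in> rcosets Q" and b: "b \<in> carrier G" for C b
  proof -
    obtain a where a: "a \<in> carrier G" "C = Q #> a" using rcE[OF C] by blast
    then have "C #> b = Q #> (a \<otimes> b)" using coset_mult_assoc[OF Qc] b by simp
    then show ?thesis using rcI a b by simp
  qed
  have act: "group_action K (rcosets Q) \<phi>"
  proof (rule group_actionI[OF grpK])
    show "\<And>g. g \<in> carrier K \<Longrightarrow> \<phi> g \<in> extensional (rcosets Q)" unfolding \<phi>_def by simp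
    show "\<And>g x. g \<in> carrier K \<Longrightarrow> x \<in> rcosets Q \<Longrightarrow> \<phi> g x \<in> rcosets Q"
      unfolding \<phi>_def K_def using rc Qc by auto
    show "\<And>x. x \<in> rcosets Q \<Longrightarrow> \<phi> \<one>\<^bsub>K\<^esub> x = x" unfolding \<phi>_def K_def using rcsub by simp
    show "\<phi> (g \<otimes>\<^bsub>K\<^esub> h) x = \<phi> g (\<phi> h x)"
      if g: "g \<in> carrier K" and h: "h \<in> carrier K" and x: "x \<in> rcosets Q" for g h x
    proof -
      have gc: "g \<in> carrier G" and hc: "h \<in> carrier G" using g h Qc unfolding K_def by auto
      have "\<phi> h x = x #> inv h" using x unfolding \<phi>_def by simp
      moreover have "x #> inv h \<in> rcosets Q" using rc x hc by simp
      ultimately have "\<phi> g (\<phi> h x) = (x #> inv h) #> inv g" unfolding \<phi>_def by simp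
      also have "\<dots> = x #> (inv h \<otimes> inv g)" using coset_mult_assoc rcsub[OF x] gc hc by simp
      also have "\<dots> = x #> inv (g \<otimes> h)" using gc hc by (simp add: inv_mult_group)
      also have "\<dots> = \<phi> (g \<otimes>\<^bsub>K\<^esub> h) x" using x unfolding \<phi>_def K_def by simp
      finally show ?thesis by simp
    qed
  qed
  have ordK: "order K = q ^ n" unfolding K_def order_def using cQ by simp
  have finrc: "finite (rcosets Q)"
  proof -
    have "rcosets Q = (\<lambda>a. Q #> a) ` carrier G" unfolding RCOSETS_def by auto
    then show ?thesis using fin by simp
  qed
  define Fix where "Fix = {C \<in> rcosets Q. \<forall>g\<in>carrier K. \<phi> g C = C}"
  have fm: "card (rcosets Q) mod q = card Fix mod q"
    unfolding Fix_def using fix_mod[OF act finrc q ordK] .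
  have qpos: "q ^ n > 0" using q prime_gt_0_nat by simp
  have crc: "card (rcosets Q) = p ^ i"
    using lagrange[OF Q] ordG cQ qpos prime_gt_0_nat[OF q] by simp
  have key: "((Q #> a) #> inv g = Q #> a) \<longleftrightarrow> a \<otimes> inv g \<otimes> inv a \<in> Q"
    if a: "a \<in> carrier G" and g: "g \<in> Q" for a g
  proof -
    have gc: "g \<in> carrier G" using g Qc by auto
    have e: "(Q #> a) #> inv g = Q #> (a \<otimes> inv g)" using coset_mult_assoc[OF Qc] a gc by simp
    show ?thesis
    proof
      assume "(Q #> a) #> inv g = Q #> a"
      then have "Q #> (a \<otimes> inv g) = Q #> a" using e by simp
      then have "Q #> ((a \<otimes> inv g) \<otimes> inv a) = Q" using coset_mult_inv2[of Q "a \<otimes> inv g" a] a gc Qc by auto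
      then show "a \<otimes> inv g \<otimes> inv a \<in> Q" using coset_join1[of Q "a \<otimes> inv g \<otimes> inv a"] Q a gc by auto
    next
      assume h: "a \<otimes> inv g \<otimes> inv a \<in> Q"
      then have "Q #> ((a \<otimes> inv g) \<otimes> inv a) = Q" using coset_join2[of "a \<otimes> inv g \<otimes> inv a" Q] Q a gc by auto
      then have "Q #> (a \<otimes> inv g) = Q #> a" using coset_mult_inv1[of Q "a \<otimes> inv g" a] a gc Qc by auto
      then show "(Q #> a) #> inv g = Q #> a" using e by simp
    qed
  qed
  have key2: "(\<forall>g\<in>Q. (Q #> a) #> inv g = Q #> a) \<longleftrightarrow> a \<in> N" if a: "a \<in> carrier G" for a
  proof (rule iffI)
    assume h: "\<forall>g\<in>Q. (Q #> a) #> inv g = Q #> a"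
    have hh: "\<forall>y\<in>Q. a \<otimes> y \<otimes> inv a \<in> Q"
    proof
      fix y assume y: "y \<in> Q"
      have yc: "y \<in> carrier G" using y Qc by (rule subsetD[rotated])
      have iy: "inv y \<in> Q" using subgroup.m_inv_closed[OF Q y] .
      have "(Q #> a) #> inv (inv y) = Q #> a" using h[rule_format, OF iy] .
      then have "a \<otimes> inv (inv y) \<otimes> inv a \<in> Q" using key[OF a iy] by (rule iffD1[rotated])
      then show "a \<otimes> y \<otimes> inv a \<in> Q" unfolding inv_inv[OF yc] .
    qed
    show "a \<in> N" unfolding N_def by (intro CollectI conjI a hh)
  next
    assume "a \<in> N"
    then have h: "\<forall>y\<in>Q. a \<otimes> y \<otimes> inv a \<in> Q" unfolding N_def mem_Collect_eq by (rule conjunct2)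
    show "\<forall>g\<in>Q. (Q #> a) #> inv g = Q #> a"
    proof
      fix g assume g: "g \<in> Q"
      have "inv g \<in> Q" using subgroup.m_inv_closed[OF Q g] .
      then have "a \<otimes> inv g \<otimes> inv a \<in> Q" using h by (rule bspec[rotated])
      then show "(Q #> a) #> inv g = Q #> a" using key[OF a g] by (rule iffD2[rotated])
    qed
  qed
  define GN where "GN = G\<lparr>carrier := N\<rparr>"
  have grpGN: "group GN" unfolding GN_def using subgroup.subgroup_is_group[OF Nsub is_group] .
  have FixGN: "Fix = rcosets\<^bsub>GN\<^esub> Q"
  proof
    show "Fix \<subseteq> rcosets\<^bsub>GN\<^esub> Q"
    proof
      fix C assume C: "C \<in> Fix"
      then have Crc: "C \<in> rcosets Q" and fixC: "\<forall>g\<in>Q. \<phi> g C = C" unfolding Fix_def K_def by auto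
      obtain a where a: "a \<in> carrier G" "C = Q #> a" using rcE[OF Crc] by blast
      have "\<forall>g\<in>Q. (Q #> a) #> inv g = Q #> a" using fixC Crc a unfolding \<phi>_def by simp
      then have "a \<in> N" using key2 a by blast
      then show "C \<in> rcosets\<^bsub>GN\<^esub> Q" unfolding RCOSETS_def GN_def r_coset_def using a
        by (auto simp: r_coset_def)
    qed
    show "rcosets\<^bsub>GN\<^esub> Q \<subseteq> Fix"
    proof
      fix C assume "C \<in> rcosets\<^bsub>GN\<^esub> Q"
      then obtain a where a: "a \<in> N" "C = Q #> a" unfolding RCOSETS_def GN_def r_coset_def
        by (auto simp: r_coset_def)
      have ac: "a \<in> carrier G" using a Nc by auto
      have Crc: "C \<in> rcosets Q" using rcI ac a by simp
      have "\<forall>g\<in>Q. (Q #> a) #> inv g = Q #> a" using key2 ac a by blast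
      then show "C \<in> Fix" unfolding Fix_def K_def \<phi>_def using Crc a by simp
    qed
  qed
  have QsubGN: "subgroup Q GN"
  proof (rule subgroup.intro)
    show "Q \<subseteq> carrier GN" unfolding GN_def using QN by simp
    show "\<And>x y. x \<in> Q \<Longrightarrow> y \<in> Q \<Longrightarrow> x \<otimes>\<^bsub>GN\<^esub> y \<in> Q"
      unfolding GN_def using subgroup.m_closed[OF Q] by simp
    show "\<one>\<^bsub>GN\<^esub> \<in> Q" unfolding GN_def using subgroup.one_closed[OF Q] by simp
    fix x assume x: "x \<in> Q"
    have "inv\<^bsub>GN\<^esub> x = inv x" unfolding GN_def using m_inv_consistent[OF Nsub subsetD[OF QN x]] .
    then show "inv\<^bsub>GN\<^esub> x \<in> Q" using subgroup.m_inv_closed[OF Q x] by simp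
  qed
  have c1: "card Fix * q ^ n = card N"
  proof -
    have "card (rcosets\<^bsub>GN\<^esub> Q) * card Q = order GN" by (rule group.lagrange[OF grpGN QsubGN])
    moreover have "order GN = card N" unfolding order_def GN_def by simp
    ultimately show ?thesis using FixGN cQ by simp
  qed
  have c2: "card N dvd p ^ i * q ^ n"
  proof -
    have "card (rcosets N) * card N = p ^ i * q ^ n" using lagrange[OF Nsub] ordG by simp
    then show ?thesis by (metis dvd_triv_right)
  qed
  have "card Fix * q ^ n dvd p ^ i * q ^ n" using c1 c2 by simp
  then have "card Fix dvd p ^ i" using qpos prime_gt_0_nat[OF q] by simp
  then obtain j where j: "j \<le> i" "card Fix = p ^ j" using divides_primepow_nat[OF p] by blast
  have "p ^ i mod q = p ^ j mod q" using fm crc j by simp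
  then have ji: "j = i" using arith_key[OF p q pq j(1) im _ nd] by simp
  have "card N = order G" using c1 j ordG ji by simp
  then have NG: "N = carrier G" using card_subset_eq[OF fin Nc] unfolding order_def by simp
  show ?thesis
  proof (intro ballI)
    fix a y assume a: "a \<in> carrier G" and y: "y \<in> Q"
    have "a \<in> N" using a NG by simp
    then have "\<forall>y\<in>Q. a \<otimes> y \<otimes> inv a \<in> Q" unfolding N_def mem_Collect_eq by (rule conjunct2)
    then show "a \<otimes> y \<otimes> inv a \<in> Q" using y by (rule bspec)
  qed
qed
end


lemma (in group) comm_pow1:
  assumes x: "x \<in> carrier G" and y: "y \<in> carrier G" and c: "x \<otimes> y = y \<otimes> x"
  shows "x \<otimes> y [^] (n::nat) = y [^] n \<otimes> x"
proof (induction n)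
  case 0 then show ?case using x by simp
next
  case (Suc n)
  have "x \<otimes> y [^] Suc n = (x \<otimes> y [^] n) \<otimes> y" using x y by (simp add: m_assoc)
  also have "\<dots> = (y [^] n \<otimes> x) \<otimes> y" using Suc by simp
  also have "\<dots> = y [^] n \<otimes> (x \<otimes> y)" using x y by (simp add: m_assoc)
  also have "\<dots> = y [^] n \<otimes> (y \<otimes> x)" using c by simp
  also have "\<dots> = y [^] Suc n \<otimes> x" using x y by (simp add: m_assoc)
  finally show ?case .
qed

lemma (in group) comm_pow2:
  assumes x: "x \<in> carrier G" and y: "y \<in> carrier G" and c: "x \<otimes> y = y \<otimes> x"
  shows "x [^] (a::nat) \<otimes> y [^] (b::nat) = y [^] b \<otimes> x [^] a"
proof -
  have c1: "y [^] b \<otimes> x = x \<otimes> y [^] b" using comm_pow1[OF x y c] by simp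
  show ?thesis using comm_pow1[OF _ x c1] y by simp
qed

lemma (in group) conj_comm:
  assumes a: "a \<in> carrier G" and b: "b \<in> carrier G" and e: "a \<otimes> b \<otimes> inv a = b"
  shows "a \<otimes> b = b \<otimes> a"
proof -
  have "a \<otimes> b = (a \<otimes> b \<otimes> inv a) \<otimes> a" using a b by (simp add: m_assoc)
  then show ?thesis using e by simp
qed

lemma (in group) elem_prime_ord:
  assumes x: "x \<in> carrier G" and x1: "x \<noteq> \<one>" and r: "Factorial_Ring.prime r"
    and e: "x [^] (r ^ k) = \<one>"
  shows "\<exists>c. ord (x [^] (r ^ c)) = r"
proof -
  have "ord x dvd r ^ k" using pow_eq_id[OF x] e by simp
  then obtain b where b: "ord x = r ^ b" using divides_primepow_nat[OF r] by blast
  have "b \<noteq> 0" using b ord_eq_1[OF x] x1 by auto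
  then have d: "r ^ (b - 1) dvd ord x" unfolding b by (simp add: le_imp_power_dvd)
  have "ord (x [^] (r ^ (b - 1))) = ord x div r ^ (b - 1)"
    using ord_pow[OF x d] r by (simp add: prime_gt_0_nat)
  also have "\<dots> = r"
  proof -
    obtain b' where b': "b = Suc b'" using \<open>b \<noteq> 0\<close> not0_implies_Suc by blast
    have "r ^ b' > 0" using r by (simp add: prime_gt_0_nat)
    then show ?thesis unfolding b b' by simp
  qed
  finally show ?thesis by blast
qed

lemma ord_arith:
  fixes d p q :: nat
  assumes p: "Factorial_Ring.prime p" and q: "Factorial_Ring.prime q" and pq: "p \<noteq> q"
    and d: "d dvd p * q" and np: "\<not> d dvd p" and nq: "\<not> d dvd q"
  shows "d = p * q"
proof -
  have "p dvd d"
  proof (rule ccontr)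
    assume "\<not> p dvd d"
    then have "coprime p d" using p by (simp add: prime_imp_coprime)
    then have "d dvd q" using d by (metis coprime_commute coprime_dvd_mult_right_iff)
    then show False using nq by simp
  qed
  moreover have "q dvd d"
  proof (rule ccontr)
    assume "\<not> q dvd d"
    then have "coprime q d" using q by (simp add: prime_imp_coprime)
    then have "d dvd p" using d by (metis coprime_commute coprime_dvd_mult_left_iff)
    then show False using np by simp
  qed
  moreover have "coprime p q" using p q pq by (simp add: primes_coprime)
  ultimately have "p * q dvd d" by (simp add: divides_mult)
  then show ?thesis using d by (simp add: dvd_antisym)
qed



theorem theorem2p4:
  fixes G (structure) and p q m n i :: nat
  assumes "group G" and "finite (carrier G)"
    and "Factorial_Ring.prime p" and "Factorial_Ring.prime q" and "p \<noteq> q"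
    and "p dvd order G" and "q dvd order G"
    and "m > 0" and "n > 0"
    and "1 \<le> i" and "i \<le> m"
    and "order G = p ^ i * q ^ n"
    and "\<not> p dvd (q ^ n - 1)"
    and "\<not> q dvd (p ^ (gcd (lcm_upto m) (q - 1)) - 1)"
  shows "\<exists>H. subgroup H G \<and> comm_group (G\<lparr>carrier := H\<rparr>) \<and> card H = p * q"
proof -
  note grp = assms(1) and fin = assms(2) and p = assms(3) and q = assms(4) and pq = assms(5)
    and i1 = assms(10) and im = assms(11) and ordG = assms(12) and ndp = assms(13) and nd = assms(14)
  interpret G: group G by (rule grp)
  obtain Q where Q: "subgroup Q G" and cQ: "card Q = q ^ n"
    using sylow_thm[OF q grp _ fin, of n "p ^ i"] ordG by (auto simp: mult.commute)
  obtain P where P: "subgroup P G" and cP: "card P = p ^ i"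
    using sylow_thm[OF p grp ordG fin] by blast
  have Qc: "Q \<subseteq> carrier G" using Q subgroup.subset by blast
  have Pc: "P \<subseteq> carrier G" using P subgroup.subset by blast
  have finQ: "finite Q" using fin Qc finite_subset by blast
  have normal: "\<forall>a\<in>carrier G. \<forall>y\<in>Q. a \<otimes> y \<otimes> inv a \<in> Q"
    by (rule G.normal_sylow[OF fin p q pq im ordG nd Q cQ])
  define K where "K = G\<lparr>carrier := P\<rparr>"
  define \<phi> where "\<phi> = (\<lambda>g. \<lambda>y\<in>Q. g \<otimes> y \<otimes> inv g)"
  have grpK: "group K" unfolding K_def using subgroup.subgroup_is_group[OF P grp] .
  have act: "group_action K Q \<phi>"
  proof (rule group_actionI[OF grpK])
    show "\<And>g. g \<in> carrier K \<Longrightarrow> \<phi> g \<in> extensional Q" unfolding \<phi>_def by simp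
    show "\<phi> g y \<in> Q" if g: "g \<in> carrier K" and y: "y \<in> Q" for g y
    proof -
      have gc: "g \<in> carrier G" using g Pc unfolding K_def by auto
      have "g \<otimes> y \<otimes> inv g \<in> Q" using normal gc y by blast
      then show ?thesis using y unfolding \<phi>_def by simp
    qed
    show "\<phi> \<one>\<^bsub>K\<^esub> y = y" if y: "y \<in> Q" for y
    proof -
      have yc: "y \<in> carrier G" using y Qc by (rule subsetD[rotated])
      show ?thesis using y yc unfolding \<phi>_def K_def by simp
    qed
    show "\<phi> (g \<otimes>\<^bsub>K\<^esub> h) y = \<phi> g (\<phi> h y)"
      if g: "g \<in> carrier K" and h: "h \<in> carrier K" and y: "y \<in> Q" for g h y
    proof -
      have gc: "g \<in> carrier G" and hc: "h \<in> carrier G" using g h Pc unfolding K_def by auto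
      have yc: "y \<in> carrier G" using y Qc by (rule subsetD[rotated])
      have hy: "h \<otimes> y \<otimes> inv h \<in> Q" using normal hc y by blast
      have "\<phi> g (\<phi> h y) = g \<otimes> (h \<otimes> y \<otimes> inv h) \<otimes> inv g" using y hy unfolding \<phi>_def by simp
      also have "\<dots> = (g \<otimes> h) \<otimes> y \<otimes> inv (g \<otimes> h)" using G.t2[OF gc hc yc] by simp
      also have "\<dots> = \<phi> (g \<otimes>\<^bsub>K\<^esub> h) y" using y unfolding \<phi>_def K_def by simp
      finally show ?thesis by simp
    qed
  qed
  have ordK: "order K = p ^ i" unfolding K_def order_def using cP by simp
  define Fix where "Fix = {y \<in> Q. \<forall>g\<in>carrier K. \<phi> g y = y}"
  have fm: "card Q mod p = card Fix mod p"
    unfolding Fix_def using fix_mod[OF act finQ p ordK] .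
  have oneFix: "\<one> \<in> Fix"
  proof -
    have "\<one> \<in> Q" using subgroup.one_closed[OF Q] .
    moreover have "\<phi> g \<one> = \<one>" if "g \<in> carrier K" for g
    proof -
      have "g \<in> carrier G" using that Pc unfolding K_def by auto
      then show ?thesis using \<open>\<one> \<in> Q\<close> unfolding \<phi>_def by simp
    qed
    ultimately show ?thesis unfolding Fix_def by simp
  qed
  obtain y where yFix: "y \<in> Fix" and y1: "y \<noteq> \<one>"
  proof (rule ccontr)
    assume "\<not> thesis"
    with that have "Fix \<subseteq> {\<one>}" by blast
    then have "Fix = {\<one>}" using oneFix by blast
    then have "card Q mod p = 1 mod p" using fm by simp
    then have "[q ^ n = 1] (mod p)" using cQ unfolding cong_def by simp
    then have "p dvd q ^ n - 1" by (rule cong_to_1_nat)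
    then show False using ndp by simp
  qed
  have yQ: "y \<in> Q" using yFix unfolding Fix_def by simp
  have yc: "y \<in> carrier G" using yQ Qc by (rule subsetD[rotated])
  have ycomm: "g \<otimes> y = y \<otimes> g" if g: "g \<in> P" for g
  proof -
    have gc: "g \<in> carrier G" using g Pc by (rule subsetD[rotated])
    have "\<phi> g y = y" using yFix g unfolding Fix_def K_def by simp
    then have "g \<otimes> y \<otimes> inv g = y" using yQ unfolding \<phi>_def by simp
    then show ?thesis by (rule G.conj_comm[OF gc yc])
  qed
  have "P \<noteq> {\<one>}"
  proof
    assume "P = {\<one>}"
    then have "card P = 1" by simp
    moreover have "p ^ i > 1" using i1 prime_gt_1_nat[OF p] by (intro one_less_power) auto
    ultimately show False using cP by linarith
  qed
  then obtain x where xP: "x \<in> P" and x1: "x \<noteq> \<one>"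
    using subgroup.one_closed[OF P] by blast
  have xc: "x \<in> carrier G" using xP Pc by (rule subsetD[rotated])
  have xe: "x [^] (p ^ i) = \<one>"
  proof -
    have "x [^]\<^bsub>K\<^esub> order K = \<one>\<^bsub>K\<^esub>" using group.pow_order_eq_1[OF grpK] xP unfolding K_def by simp
    then show ?thesis using ordK G.nat_pow_consistent[of x "p ^ i" P] unfolding K_def by simp
  qed
  obtain a where xa: "G.ord (x [^] (p ^ a)) = p" using G.elem_prime_ord[OF xc x1 p xe] by blast
  have ye: "y [^] (q ^ n) = \<one>"
  proof -
    define KQ where "KQ = G\<lparr>carrier := Q\<rparr>"
    have grpKQ: "group KQ" unfolding KQ_def using subgroup.subgroup_is_group[OF Q grp] .
    have "y [^]\<^bsub>KQ\<^esub> order KQ = \<one>\<^bsub>KQ\<^esub>" using group.pow_order_eq_1[OF grpKQ] yQ unfolding KQ_def by simp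
    moreover have "order KQ = q ^ n" unfolding KQ_def order_def using cQ by simp
    ultimately show ?thesis using G.nat_pow_consistent[of y "q ^ n" Q] unfolding KQ_def by simp
  qed
  obtain b where yb: "G.ord (y [^] (q ^ b)) = q" using G.elem_prime_ord[OF yc y1 q ye] by blast
  define x' where "x' = x [^] (p ^ a)"
  define y' where "y' = y [^] (q ^ b)"
  have x'c: "x' \<in> carrier G" unfolding x'_def using xc by simp
  have y'c: "y' \<in> carrier G" unfolding y'_def using yc by simp
  have cxy: "x' \<otimes> y' = y' \<otimes> x'"
    unfolding x'_def y'_def using G.comm_pow2[OF xc yc ycomm[OF xP]] .
  define g where "g = x' \<otimes> y'"
  have gc: "g \<in> carrier G" unfolding g_def using x'c y'c by simp
  have ordx: "G.ord x' = p" using xa unfolding x'_def .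
  have ordy: "G.ord y' = q" using yb unfolding y'_def .
  have d: "G.ord g dvd p * q" unfolding g_def using G.ord_mul_divides[OF cxy x'c y'c] ordx ordy by simp
  have np: "\<not> G.ord g dvd p"
  proof
    assume "G.ord g dvd p"
    then have "g [^] p = \<one>" using G.pow_eq_id[OF gc] by simp
    moreover have "g [^] p = x' [^] p \<otimes> y' [^] p"
      unfolding g_def using G.pow_mult_distrib[OF cxy x'c y'c] .
    moreover have "x' [^] p = \<one>" using G.pow_eq_id[OF x'c] ordx by simp
    ultimately have "y' [^] p = \<one>" using y'c by simp
    then have "q dvd p" using G.pow_eq_id[OF y'c] ordy by simp
    then show False using p q pq by (metis prime_nat_iff primes_dvd_imp_eq)
  qed
  have nq: "\<not> G.ord g dvd q"
  proof
    assume "G.ord g dvd q"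
    then have "g [^] q = \<one>" using G.pow_eq_id[OF gc] by simp
    moreover have "g [^] q = x' [^] q \<otimes> y' [^] q"
      unfolding g_def using G.pow_mult_distrib[OF cxy x'c y'c] .
    moreover have "y' [^] q = \<one>" using G.pow_eq_id[OF y'c] ordy by simp
    ultimately have "x' [^] q = \<one>" using x'c by simp
    then have "p dvd q" using G.pow_eq_id[OF x'c] ordx by simp
    then show False using p q pq by (metis prime_nat_iff primes_dvd_imp_eq)
  qed
  have og: "G.ord g = p * q" using ord_arith[OF p q pq d np nq] .
  define H where "H = generate G {g}"
  have Hsub: "subgroup H G" unfolding H_def using G.generate_is_subgroup gc by simp
  have cH: "card H = p * q" unfolding H_def using G.generate_pow_card[OF gc] og by simp
  have sg: "subgroup_generated G {g} = G\<lparr>carrier := H\<rparr>"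
    unfolding subgroup_generated_def H_def using gc by (simp add: Int_absorb1)
  have "comm_group (subgroup_generated G {g})"
    using group.cyclic_imp_abelian_group[OF G.group_subgroup_generated G.cyclic_group_generated] .
  then have "comm_group (G\<lparr>carrier := H\<rparr>)" using sg by simp
  then show ?thesis using Hsub cH by blast
qed

end
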